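(* Let $(k,|\cdot|)$ be an algebraically closed complete metrized field, $\mathbb{D}=\{|t|<1\}\subset k$, and let $P_t(z)=z^d+\alpha_1(t)z^{d-1}+\cdots+\alpha_d(t)$ with $d\ge2$ and $\alpha_i\in\mathcal{O}(\mathbb{D})[t^{-1}]$ (a meromorphic family of monic polynomials). Then there exist a constant $C>0$ and an integer $N\ge1$ such that the following holds: for every meromorphic function of the form $a(t)=t^{-l}(1+h(t))$ with $l\ge N$ an integer and $h$ analytic on $\mathbb{D}$ with $h(0)=0$ and $\sup_{\mathbb{D}}|h|\le\frac12$, one has $$\left|\frac1d\log|P_t(a(t))|-\log|a(t)|\right|\le C\quad\text{for all }0<|t|\le\tfrac12.$$
   Context: $\mathcal{O}(\mathbb{D})$ is the ring of analytic functions on $\mathbb{D}$ (power series converging on every disk of radius $\rho<1$); $\mathcal{O}(\mathbb{D})[t^{-1}]$ are meromorphic functions on $\mathbb{D}$ with poles only at $0$. *)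

theory Defs
  imports Complex_Main "HOL-Computational_Algebra.Polynomial"
begin

definition is_abs_value :: "('a::field \<Rightarrow> real) \<Rightarrow> bool" where
  "is_abs_value nrm \<longleftrightarrow>
     (\<forall>x. 0 \<le> nrm x) \<and> (\<forall>x. nrm x = 0 \<longleftrightarrow> x = 0) \<and>
     (\<forall>x y. nrm (x * y) = nrm x * nrm y) \<and>
     (\<forall>x y. nrm (x + y) \<le> nrm x + nrm y)"

definition abs_complete :: "('a::field \<Rightarrow> real) \<Rightarrow> bool" where
  "abs_complete nrm \<longleftrightarrow>
     (\<forall>X::nat \<Rightarrow> 'a. (\<forall>e>0. \<exists>M. \<forall>m\<ge>M. \<forall>n\<ge>M. nrm (X m - X n) < e) \<longrightarrow>
        (\<exists>L. (\<lambda>n. nrm (X n - L)) \<longlonglongrightarrow> 0))"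

definition alg_closed_field :: "'a::field itself \<Rightarrow> bool" where
  "alg_closed_field _ \<longleftrightarrow> (\<forall>p :: 'a poly. degree p \<ge> 1 \<longrightarrow> (\<exists>x. poly p x = 0))"

definition complete_metrized_acf :: "('a::field \<Rightarrow> real) \<Rightarrow> bool" where
  "complete_metrized_acf nrm \<longleftrightarrow>
     is_abs_value nrm \<and> abs_complete nrm \<and> alg_closed_field TYPE('a)"

definition abs_sums :: "('a::field \<Rightarrow> real) \<Rightarrow> (nat \<Rightarrow> 'a) \<Rightarrow> 'a \<Rightarrow> bool" where
  "abs_sums nrm f s \<longleftrightarrow> (\<lambda>N. nrm ((\<Sum>n<N. f n) - s)) \<longlonglongrightarrow> 0"

definition conv_on_unit_disk :: "('a::field \<Rightarrow> real) \<Rightarrow> (nat \<Rightarrow> 'a) \<Rightarrow> bool" where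
  "conv_on_unit_disk nrm c \<longleftrightarrow> (\<forall>\<rho>::real. 0 \<le> \<rho> \<and> \<rho> < 1 \<longrightarrow> summable (\<lambda>n. nrm (c n) * \<rho> ^ n))"

definition analytic_D :: "('a::field \<Rightarrow> real) \<Rightarrow> ('a \<Rightarrow> 'a) \<Rightarrow> bool" where
  "analytic_D nrm f \<longleftrightarrow>
     (\<exists>c. conv_on_unit_disk nrm c \<and> (\<forall>t. nrm t < 1 \<longrightarrow> abs_sums nrm (\<lambda>n. c n * t ^ n) (f t)))"

text \<open>f is in O(D)[t^{-1}]: meromorphic on D with poles only at 0
  (compared on the punctured disk 0 < |t| < 1).\<close>
definition meromorphic_D0 :: "('a::field \<Rightarrow> real) \<Rightarrow> ('a \<Rightarrow> 'a) \<Rightarrow> bool" where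
  "meromorphic_D0 nrm f \<longleftrightarrow>
     (\<exists>m::nat. \<exists>g. analytic_D nrm g \<and> (\<forall>t. 0 < nrm t \<and> nrm t < 1 \<longrightarrow> f t = inverse t ^ m * g t))"

definition Pfam :: "nat \<Rightarrow> (nat \<Rightarrow> 'a \<Rightarrow> 'a) \<Rightarrow> 'a \<Rightarrow> 'a \<Rightarrow> 'a::field" where
  "Pfam d \<alpha> t z = z ^ d + (\<Sum>i=1..d. \<alpha> i t * z ^ (d - i))"

end

theory Submission
  imports Defs
begin

lemma av_basic:
  assumes "is_abs_value nrm"
  shows "nrm 0 = 0" "nrm 1 = 1" "\<And>x. nrm (- x) = nrm x" "\<And>x y. nrm (x*y) = nrm x * nrm y"
    "\<And>x y. nrm (x+y) \<le> nrm x + nrm y" "\<And>x. 0 \<le> nrm x" "\<And>x. nrm x = 0 \<longleftrightarrow> x = 0"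
proof -
  note A = assms[unfolded is_abs_value_def]
  show z: "nrm 0 = 0" using A by blast
  have "nrm 1 = nrm 1 * nrm 1" using A by (metis mult_1)
  moreover have "nrm 1 \<noteq> 0" using A by (metis one_neq_zero)
  ultimately show o: "nrm 1 = 1" by simp
  fix x
  have m: "\<forall>x y. nrm (x*y) = nrm x * nrm y" using A by blast
  have "nrm (-1) * nrm (-1) = 1" using m[rule_format, of "-1" "-1"] o by simp
  moreover have "nrm (-1) \<ge> 0" using A by blast
  ultimately have "nrm (-1) = 1"
    by (metis power2_eq_1_iff power2_eq_square neg_0_le_iff_le le_minus_one_simps(3) order_trans)
  then show "nrm (-x) = nrm x" using A by (metis minus_mult_left mult_1 mult.commute)
qed (use assms[unfolded is_abs_value_def] in blast)+

lemma av_power: "is_abs_value nrm \<Longrightarrow> nrm (x ^ n) = nrm x ^ n"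
  by (induction n) (simp_all add: av_basic)

lemma av_inverse: "is_abs_value nrm \<Longrightarrow> nrm (inverse x) = inverse (nrm x)"
proof (cases "x = 0")
  case True assume "is_abs_value nrm" then show ?thesis using True by (simp add: av_basic)
next
  case False assume a: "is_abs_value nrm"
  have "nrm x * nrm (inverse x) = 1" using a False by (metis av_basic(2,4) right_inverse)
  then show ?thesis by (metis inverse_unique)
qed

lemma av_diff: "is_abs_value nrm \<Longrightarrow> nrm x \<le> nrm y + nrm (x - y)"
  by (metis av_basic(5) add.commute diff_add_cancel)

lemma av_sum: "is_abs_value nrm \<Longrightarrow> nrm (\<Sum>i\<in>A. f i) \<le> (\<Sum>i\<in>A. nrm (f i))"
proof (induction A rule: infinite_finite_induct)
  case (insert x F) then show ?case
    by simp (metis av_basic(5) add_left_mono order_trans)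
qed (simp_all add: av_basic)

lemma analytic_bound:
  assumes av: "is_abs_value nrm" and an: "analytic_D nrm g"
  shows "\<exists>B\<ge>0. \<forall>t. nrm t \<le> 1/2 \<longrightarrow> nrm (g t) \<le> B"
proof -
  obtain c where cc: "conv_on_unit_disk nrm c" and cs: "\<forall>t. nrm t < 1 \<longrightarrow> abs_sums nrm (\<lambda>n. c n * t ^ n) (g t)"
    using an unfolding analytic_D_def by blast
  have sm: "summable (\<lambda>n. nrm (c n) * (1/2) ^ n)" using cc unfolding conv_on_unit_disk_def by simp
  define B where "B = (\<Sum>n. nrm (c n) * (1/2::real) ^ n)"
  have B0: "B \<ge> 0" unfolding B_def using av by (intro suminf_nonneg sm) (simp add: av_basic)
  show ?thesis
  proof (intro exI[of _ B] conjI allI impI B0)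
    fix t assume t: "nrm t \<le> 1/2"
    have lim: "(\<lambda>N. nrm ((\<Sum>n<N. c n * t ^ n) - g t)) \<longlonglongrightarrow> 0"
      using cs t unfolding abs_sums_def by simp
    have "\<forall>N. nrm (g t) \<le> B + nrm ((\<Sum>n<N. c n * t ^ n) - g t)"
    proof
      fix N
      have "nrm (g t) \<le> nrm (\<Sum>n<N. c n * t ^ n) + nrm (g t - (\<Sum>n<N. c n * t ^ n))" by (rule av_diff[OF av])
      also have "nrm (g t - (\<Sum>n<N. c n * t ^ n)) = nrm ((\<Sum>n<N. c n * t ^ n) - g t)"
        by (metis av av_basic(3) minus_diff_eq)
      also have "nrm (\<Sum>n<N. c n * t ^ n) \<le> (\<Sum>n<N. nrm (c n * t ^ n))" by (rule av_sum[OF av])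
      also have "\<dots> \<le> (\<Sum>n<N. nrm (c n) * (1/2) ^ n)"
        by (intro sum_mono) (simp add: av_basic(4)[OF av] av_power[OF av], intro mult_left_mono power_mono t, simp_all add: av_basic(6)[OF av])
      also have "\<dots> \<le> B" unfolding B_def
        by (intro sum_le_suminf sm) (simp_all add: av_basic(6)[OF av])
      finally show "nrm (g t) \<le> B + nrm ((\<Sum>n<N. c n * t ^ n) - g t)" by simp
    qed
    moreover have "(\<lambda>N. B + nrm ((\<Sum>n<N. c n * t ^ n) - g t)) \<longlonglongrightarrow> B + 0"
      by (intro tendsto_add tendsto_const lim)
    ultimately have "nrm (g t) \<le> B + 0"
      by (intro LIMSEQ_le_const[of "\<lambda>N. B + nrm ((\<Sum>n<N. c n * t ^ n) - g t)"]) auto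
    then show "nrm (g t) \<le> B" by simp
  qed
qed

lemma ln_bound: assumes "1/2 \<le> (x::real)" "x \<le> 3/2" shows "\<bar>ln x\<bar> \<le> 1"
proof -
  have x0: "x > 0" using assms by simp
  have "ln x \<le> x - 1" using x0 by (rule ln_le_minus_one)
  moreover have "ln (1/x) \<le> 1/x - 1" using x0 by (intro ln_le_minus_one) simp
  moreover have "ln (1/x) = - ln x" using x0 by (simp add: ln_div)
  moreover have "1/x \<le> 2" using assms x0 by (simp add: field_simps)
  ultimately show ?thesis using assms by linarith
qed

theorem lemma2p1:
  fixes nrm :: "'a::field \<Rightarrow> real"
    and d :: nat
    and \<alpha> :: "nat \<Rightarrow> 'a \<Rightarrow> 'a"
  assumes "complete_metrized_acf nrm"
    and "d \<ge> 2"
    and "\<forall>i\<in>{1..d}. meromorphic_D0 nrm (\<alpha> i)"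
  shows "\<exists>C>0. \<exists>N::nat\<ge>1. \<forall>l::nat. \<forall>h::'a \<Rightarrow> 'a.
           l \<ge> N \<and> analytic_D nrm h \<and> h 0 = 0 \<and> (\<forall>t. nrm t < 1 \<longrightarrow> nrm (h t) \<le> 1/2) \<longrightarrow>
           (\<forall>t. 0 < nrm t \<and> nrm t \<le> 1/2 \<longrightarrow>
              (let a = inverse t ^ l * (1 + h t) in
                 Pfam d \<alpha> t a \<noteq> 0 \<and>
                 \<bar>ln (nrm (Pfam d \<alpha> t a)) / real d - ln (nrm a)\<bar> \<le> C))"
proof -
  have av: "is_abs_value nrm" using assms(1) unfolding complete_metrized_acf_def by blast
  note avb = av_basic[OF av] and avp = av_power[OF av] and avi = av_inverse[OF av]
  have "\<forall>i\<in>{1..d}. \<exists>m. \<exists>B. B \<ge> 0 \<and> (\<forall>t. 0 < nrm t \<and> nrm t \<le> 1/2 \<longrightarrow> nrm (\<alpha> i t) \<le> B * inverse (nrm t) ^ m)"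
  proof
    fix i assume "i \<in> {1..d}"
    then obtain m g where g: "analytic_D nrm g" and eq: "\<forall>t. 0 < nrm t \<and> nrm t < 1 \<longrightarrow> \<alpha> i t = inverse t ^ m * g t"
      using assms(3) unfolding meromorphic_D0_def by blast
    obtain B where B: "B \<ge> 0" "\<forall>t. nrm t \<le> 1/2 \<longrightarrow> nrm (g t) \<le> B" using analytic_bound[OF av g] by blast
    show "\<exists>m. \<exists>B. B \<ge> 0 \<and> (\<forall>t. 0 < nrm t \<and> nrm t \<le> 1/2 \<longrightarrow> nrm (\<alpha> i t) \<le> B * inverse (nrm t) ^ m)"
    proof (intro exI conjI allI impI)
      fix t assume t: "0 < nrm t \<and> nrm t \<le> 1/2"
      have "nrm (\<alpha> i t) = inverse (nrm t) ^ m * nrm (g t)" using eq t by (simp add: avb avp avi)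
      also have "\<dots> \<le> inverse (nrm t) ^ m * B" using B t by (intro mult_left_mono) auto
      finally show "nrm (\<alpha> i t) \<le> B * inverse (nrm t) ^ m" by (simp add: mult.commute)
    qed (rule B(1))
  qed
  then have "\<exists>m. \<forall>i\<in>{1..d}. \<exists>B. B \<ge> 0 \<and> (\<forall>t. 0 < nrm t \<and> nrm t \<le> 1/2 \<longrightarrow> nrm (\<alpha> i t) \<le> B * inverse (nrm t) ^ m i)"
    by (rule bchoice)
  then obtain m where "\<forall>i\<in>{1..d}. \<exists>B. B \<ge> 0 \<and> (\<forall>t. 0 < nrm t \<and> nrm t \<le> 1/2 \<longrightarrow> nrm (\<alpha> i t) \<le> B * inverse (nrm t) ^ m i)"
    by blast
  then have "\<exists>B. \<forall>i\<in>{1..d}. B i \<ge> 0 \<and> (\<forall>t. 0 < nrm t \<and> nrm t \<le> 1/2 \<longrightarrow> nrm (\<alpha> i t) \<le> B i * inverse (nrm t) ^ m i)"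
    by (rule bchoice)
  then obtain B where mB: "\<forall>i\<in>{1..d}. B i \<ge> 0 \<and> (\<forall>t. 0 < nrm t \<and> nrm t \<le> 1/2 \<longrightarrow> nrm (\<alpha> i t) \<le> B i * inverse (nrm t) ^ m i)"
    by blast
  define M where "M = (\<Sum>i=1..d. m i)"
  define K where "K = (\<Sum>i=1..d. B i * 2 ^ i :: real)"
  define n0 where "n0 = nat \<lceil>2*K\<rceil> + 1"
  have mM: "m i \<le> M" if "i \<in> {1..d}" for i
    unfolding M_def using that by (intro member_le_sum) auto
  have K0: "K \<ge> 0" unfolding K_def using mB by (intro sum_nonneg) auto
  have Kn0: "K * (1/2) ^ n0 \<le> 1/2"
  proof -
    have "2*K \<le> real n0" unfolding n0_def by linarith
    also have "real n0 \<le> 2 ^ n0"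
    proof -
      have "n0 < 2 ^ n0" by (rule less_exp)
      then have "real n0 \<le> real (2 ^ n0)" by simp
      then show ?thesis by simp
    qed
    finally show ?thesis by (simp add: field_simps)
  qed
  show ?thesis
  proof (rule exI[of _ "1::real"], rule conjI[OF zero_less_one], rule exI[of _ "M + n0"], intro conjI allI impI)
    fix l h t
    assume H: "M + n0 \<le> l \<and> analytic_D nrm h \<and> h 0 = 0 \<and> (\<forall>t. nrm t < 1 \<longrightarrow> nrm (h t) \<le> 1/2)"
      and t: "0 < nrm t \<and> nrm t \<le> 1/2"
    define a where "a = inverse t ^ l * (1 + h t)"
    define s where "s = inverse (nrm t)"
    have s2: "s \<ge> 2" unfolding s_def using t by (simp add: field_simps)
    have ht: "nrm (h t) \<le> 1/2" using H t by auto
    have u1: "nrm (1 + h t) \<ge> 1/2"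
    proof -
      have "nrm 1 \<le> nrm (1 + h t) + nrm (1 - (1 + h t))" by (rule av_diff[OF av])
      also have "nrm (1 - (1 + h t)) = nrm (h t)" using avb(3)[of "h t"] by simp
      finally show ?thesis using ht avb(2) by linarith
    qed
    have u2: "nrm (1 + h t) \<le> 3/2" using avb(5)[of 1 "h t"] avb(2) ht by linarith
    define A where "A = nrm a"
    have A: "A = s ^ l * nrm (1 + h t)" unfolding A_def a_def s_def by (simp add: avb avp avi)
    have A0: "A > 0" unfolding A using s2 u1 by simp
    have key: "nrm (\<alpha> i t * a ^ (d - i)) \<le> B i * 2 ^ i * (1/2) ^ n0 * A ^ d" if i: "i \<in> {1..d}" for i
    proof -
      have "l \<le> l * i" using i by simp
      then have "l * i \<ge> m i + n0" using mM[OF i] H by linarith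
      then obtain k where k: "l * i = m i + n0 + k" using le_Suc_ex by blast
      have "s ^ (m i) * 2 ^ n0 \<le> s ^ (m i) * s ^ (n0 + k)"
      proof (intro mult_left_mono)
        have "(2::real) ^ n0 \<le> s ^ n0" using s2 by (intro power_mono) auto
        also have "\<dots> \<le> s ^ (n0 + k)" using s2 by (intro power_increasing) auto
        finally show "(2::real) ^ n0 \<le> s ^ (n0 + k)" .
      qed (use s2 in simp)
      also have "\<dots> = s ^ (l * i)" by (simp add: k power_add)
      also have "\<dots> = (s ^ l) ^ i" by (simp add: power_mult)
      also have "\<dots> \<le> (2 * A) ^ i"
        using s2 u1 by (intro power_mono) (auto simp: A)
      finally have e1: "s ^ (m i) \<le> 2 ^ i * (1/2) ^ n0 * A ^ i"
        by (simp add: field_simps power_mult_distrib)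
      have "nrm (\<alpha> i t * a ^ (d - i)) = nrm (\<alpha> i t) * A ^ (d - i)" by (simp add: A_def avb avp)
      also have "\<dots> \<le> B i * s ^ (m i) * A ^ (d - i)"
        using mB i t A0 by (intro mult_right_mono) (auto simp: s_def)
      also have "\<dots> \<le> B i * (2 ^ i * (1/2) ^ n0 * A ^ i) * A ^ (d - i)"
        using mB i A0 e1 by (intro mult_right_mono mult_left_mono) auto
      also have "\<dots> = B i * 2 ^ i * (1/2) ^ n0 * (A ^ i * A ^ (d - i))" by (simp add: algebra_simps)
      also have "A ^ i * A ^ (d - i) = A ^ d" using i by (simp flip: power_add)
      finally show ?thesis .
    qed
    define S where "S = (\<Sum>i=1..d. \<alpha> i t * a ^ (d - i))"
    have PS: "Pfam d \<alpha> t a = a ^ d + S" unfolding Pfam_def S_def ..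
    have "nrm S \<le> (\<Sum>i=1..d. nrm (\<alpha> i t * a ^ (d - i)))" unfolding S_def by (rule av_sum[OF av])
    also have "\<dots> \<le> (\<Sum>i=1..d. B i * 2 ^ i * (1/2) ^ n0 * A ^ d)" by (intro sum_mono key) auto
    also have "\<dots> = K * (1/2) ^ n0 * A ^ d" unfolding K_def by (simp add: sum_distrib_right)
    also have "\<dots> \<le> 1/2 * A ^ d" using Kn0 A0 by (intro mult_right_mono) auto
    finally have Sb: "nrm S \<le> A ^ d / 2" by simp
    have ad: "nrm (a ^ d) = A ^ d" by (simp add: A_def avp)
    have P1: "nrm (Pfam d \<alpha> t a) \<ge> A ^ d / 2"
    proof -
      have "nrm (a ^ d) \<le> nrm (a ^ d + S) + nrm (a ^ d - (a ^ d + S))" by (rule av_diff[OF av])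
      also have "nrm (a ^ d - (a ^ d + S)) = nrm S" using avb(3)[of S] by simp
      finally show ?thesis using Sb ad PS by simp
    qed
    have P2: "nrm (Pfam d \<alpha> t a) \<le> 3/2 * A ^ d" using PS avb(5)[of "a ^ d" S] Sb ad by simp
    have Ad0: "A ^ d > 0" using A0 by simp
    have Pne: "Pfam d \<alpha> t a \<noteq> 0" using P1 Ad0 avb(1) by auto
    define q where "q = nrm (Pfam d \<alpha> t a) / A ^ d"
    have q1: "1/2 \<le> q" "q \<le> 3/2" unfolding q_def using P1 P2 Ad0 by (simp_all add: field_simps)
    have "ln (nrm (Pfam d \<alpha> t a)) = ln q + real d * ln A"
    proof -
      have Pp: "nrm (Pfam d \<alpha> t a) > 0" using P1 Ad0 by linarith
      have "ln q = ln (nrm (Pfam d \<alpha> t a)) - ln (A ^ d)" unfolding q_def using Pp Ad0 A0 by (simp add: ln_div)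
      moreover have "ln (A ^ d) = real d * ln A" using A0 by (simp add: ln_realpow)
      ultimately show ?thesis by simp
    qed
    then have "ln (nrm (Pfam d \<alpha> t a)) / real d - ln A = ln q / real d"
      using assms(2) by (simp add: field_simps)
    moreover have "\<bar>ln q / real d\<bar> \<le> \<bar>ln q\<bar>" 
    proof -
      have "real d \<ge> 1" using assms(2) by simp
      then have "1 * \<bar>ln q\<bar> \<le> real d * \<bar>ln q\<bar>" by (intro mult_right_mono) auto
      then show ?thesis using assms(2) by (simp add: abs_div field_simps)
    qed
    ultimately have "\<bar>ln (nrm (Pfam d \<alpha> t a)) / real d - ln A\<bar> \<le> 1" using ln_bound[OF q1] by simp
    then show "let a = inverse t ^ l * (1 + h t) in Pfam d \<alpha> t a \<noteq> 0 \<and>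
                 \<bar>ln (nrm (Pfam d \<alpha> t a)) / real d - ln (nrm a)\<bar> \<le> 1"
      using Pne unfolding Let_def a_def[symmetric] A_def by simp
  qed (simp add: n0_def)
qed

end
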